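(* Let $\mathbb{F}$ be a field with $\mathrm{char}(\mathbb{F})\neq2$, let $X$ be a unitary alternative $\mathbb{F}$-algebra, $B$ an alternative $\mathbb{F}$-algebra and $\varphi\colon B\to X$ an algebra homomorphism (not required to preserve units). Then the vector space $B\oplus X$ with multiplication $$(b,x)\cdot(b',x')=(bb',\;xx'+\varphi(b)x'+x\varphi(b'))$$ is an alternative algebra, and together with the inclusion $x\mapsto(0,x)$, the projection $(b,x)\mapsto b$ and the section $b\mapsto(b,0)$ it forms a split extension of $B$ by $X$ in $\mathbf{Alt}$.
   Context: An alternative algebra is a non-associative algebra satisfying $(yx)x=y(xx)$ and $x(xy)=(xx)y$; $\mathbf{Alt}$ is the category of such algebras with multiplicative linear maps. A split extension of $B$ by $X$ is a diagram $X\xrightarrow{k}A\underset{\beta}{\overset{\alpha}{\rightleftarrows}}B$ with $\alpha\circ\beta=\mathrm{id}_B$ and $(X,k)$ a kernel of $\alpha$. *)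

theory Defs
  imports Complex_Main "HOL-Library.Product_Plus"
begin

definition is_algebra :: "('k::field \<Rightarrow> 'v::ab_group_add \<Rightarrow> 'v) \<Rightarrow> ('v \<Rightarrow> 'v \<Rightarrow> 'v) \<Rightarrow> bool" where
  "is_algebra sc mu \<longleftrightarrow> vector_space sc \<and>
     (\<forall>x y z. mu (x + y) z = mu x z + mu y z) \<and>
     (\<forall>x y z. mu z (x + y) = mu z x + mu z y) \<and>
     (\<forall>c x y. mu (sc c x) y = sc c (mu x y)) \<and>
     (\<forall>c x y. mu x (sc c y) = sc c (mu x y))"

definition is_alt_algebra :: "('k::field \<Rightarrow> 'v::ab_group_add \<Rightarrow> 'v) \<Rightarrow> ('v \<Rightarrow> 'v \<Rightarrow> 'v) \<Rightarrow> bool" where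
  "is_alt_algebra sc mu \<longleftrightarrow> is_algebra sc mu \<and>
     (\<forall>x y. mu (mu y x) x = mu y (mu x x)) \<and>
     (\<forall>x y. mu x (mu x y) = mu (mu x x) y)"

definition unitary :: "('v \<Rightarrow> 'v \<Rightarrow> 'v) \<Rightarrow> bool" where
  "unitary mu \<longleftrightarrow> (\<exists>e. \<forall>x. mu e x = x \<and> mu x e = x)"

text \<open>Morphisms of Alt: multiplicative linear maps (units need not be preserved).\<close>
definition alg_hom :: "('k::field \<Rightarrow> 'v::ab_group_add \<Rightarrow> 'v) \<Rightarrow> ('v \<Rightarrow> 'v \<Rightarrow> 'v) \<Rightarrow>
    ('k \<Rightarrow> 'w::ab_group_add \<Rightarrow> 'w) \<Rightarrow> ('w \<Rightarrow> 'w \<Rightarrow> 'w) \<Rightarrow> ('v \<Rightarrow> 'w) \<Rightarrow> bool" where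
  "alg_hom sc1 mu1 sc2 mu2 f \<longleftrightarrow>
     (\<forall>x y. f (x + y) = f x + f y) \<and>
     (\<forall>c x. f (sc1 c x) = sc2 c (f x)) \<and>
     (\<forall>x y. f (mu1 x y) = mu2 (f x) (f y))"

text \<open>The universal property is tested
  against all alternative algebras whose underlying type is 'z (the type parameter is
  left free in the main theorem, hence universally quantified over all types).
  The zero morphism in Alt is the constant-zero map.\<close>
definition is_kernel_Alt :: "'z::ab_group_add itself \<Rightarrow>
    ('k::field \<Rightarrow> 'x::ab_group_add \<Rightarrow> 'x) \<Rightarrow> ('x \<Rightarrow> 'x \<Rightarrow> 'x) \<Rightarrow> ('x \<Rightarrow> 'a) \<Rightarrow>
    ('k \<Rightarrow> 'a::ab_group_add \<Rightarrow> 'a) \<Rightarrow> ('a \<Rightarrow> 'a \<Rightarrow> 'a) \<Rightarrow> ('a \<Rightarrow> 'b) \<Rightarrow>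
    ('b::ab_group_add) itself \<Rightarrow> bool" where
  "is_kernel_Alt _ scX muX k scA muA alpha _ \<longleftrightarrow>
     is_alt_algebra scX muX \<and>
     alg_hom scX muX scA muA k \<and> (\<forall>x. alpha (k x) = 0) \<and>
     (\<forall>(scZ :: 'k \<Rightarrow> 'z \<Rightarrow> 'z) muZ g.
        is_alt_algebra scZ muZ \<and> alg_hom scZ muZ scA muA g \<and> (\<forall>z. alpha (g z) = 0) \<longrightarrow>
        (\<exists>!h. alg_hom scZ muZ scX muX h \<and> (\<forall>z. k (h z) = g z)))"

definition split_extension_Alt :: "'z::ab_group_add itself \<Rightarrow>
    ('k::field \<Rightarrow> 'x::ab_group_add \<Rightarrow> 'x) \<Rightarrow> ('x \<Rightarrow> 'x \<Rightarrow> 'x) \<Rightarrow>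
    ('k \<Rightarrow> 'a::ab_group_add \<Rightarrow> 'a) \<Rightarrow> ('a \<Rightarrow> 'a \<Rightarrow> 'a) \<Rightarrow>
    ('k \<Rightarrow> 'b::ab_group_add \<Rightarrow> 'b) \<Rightarrow> ('b \<Rightarrow> 'b \<Rightarrow> 'b) \<Rightarrow>
    ('x \<Rightarrow> 'a) \<Rightarrow> ('a \<Rightarrow> 'b) \<Rightarrow> ('b \<Rightarrow> 'a) \<Rightarrow> bool" where
  "split_extension_Alt tz scX muX scA muA scB muB k alpha beta \<longleftrightarrow>
     is_alt_algebra scX muX \<and> is_alt_algebra scA muA \<and> is_alt_algebra scB muB \<and>
     alg_hom scA muA scB muB alpha \<and> alg_hom scB muB scA muA beta \<and>
     alpha \<circ> beta = id \<and>
     is_kernel_Alt tz scX muX k scA muA alpha TYPE('b)"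

end

theory Submission
  imports Defs
begin

lemma alg_facts:
  assumes "is_algebra sc mu"
  shows "mu (x + y) z = mu x z + mu y z" "mu z (x + y) = mu z x + mu z y"
    "mu (sc c x) y = sc c (mu x y)" "mu x (sc c y) = sc c (mu x y)"
    "mu x 0 = 0" "mu 0 x = 0" "mu (x - y) z = mu x z - mu y z" "mu z (x - y) = mu z x - mu z y"
    "sc c (x + y) = sc c x + sc c y"
proof -
  show A: "mu (x + y) z = mu x z + mu y z" for x y z using assms unfolding is_algebra_def by blast
  show B: "mu z (x + y) = mu z x + mu z y" for x y z using assms unfolding is_algebra_def by blast
  show "mu (sc c x) y = sc c (mu x y)" "mu x (sc c y) = sc c (mu x y)"
    using assms unfolding is_algebra_def by blast+
  have Z1: "mu x 0 = 0" for x using B[of x 0 0] by simp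
  have Z2: "mu 0 x = 0" for x using A[of 0 0 x] by simp
  show "mu x 0 = 0" "mu 0 x = 0" by (fact Z1, fact Z2)
  show "mu (x - y) z = mu x z - mu y z" using A[of "x - y" y z] by (simp add: algebra_simps)
  show "mu z (x - y) = mu z x - mu z y" using B[of z "x - y" y] by (simp add: algebra_simps)
  show "sc c (x + y) = sc c x + sc c y" using assms unfolding is_algebra_def vector_space_def by blast
qed

lemma hom_facts:
  assumes "alg_hom sc1 mu1 sc2 mu2 f"
  shows "f (x + y) = f x + f y" "f (sc1 c x) = sc2 c (f x)" "f (mu1 x y) = mu2 (f x) (f y)" "f 0 = 0"
proof -
  show A: "f (x + y) = f x + f y" for x y using assms unfolding alg_hom_def by blast
  show "f (sc1 c x) = sc2 c (f x)" "f (mu1 x y) = mu2 (f x) (f y)" using assms unfolding alg_hom_def by blast+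
  show "f 0 = 0" using A[of 0 0] by simp
qed

theorem mainTheorem5:
  fixes scX :: "'k::field \<Rightarrow> 'x::ab_group_add \<Rightarrow> 'x" and muX :: "'x \<Rightarrow> 'x \<Rightarrow> 'x"
    and scB :: "'k \<Rightarrow> 'b::ab_group_add \<Rightarrow> 'b" and muB :: "'b \<Rightarrow> 'b \<Rightarrow> 'b"
    and phi :: "'b \<Rightarrow> 'x"
  assumes char: "(2::'k) \<noteq> 0"
    and X: "is_alt_algebra scX muX" and Xu: "unitary muX"
    and B: "is_alt_algebra scB muB"
    and phi: "alg_hom scB muB scX muX phi"
  shows "is_alt_algebra (\<lambda>c (b, x). (scB c b, scX c x))
           (\<lambda>(b, x) (b', x'). (muB b b', muX x x' + muX (phi b) x' + muX x (phi b')))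
       \<and> split_extension_Alt TYPE('z::ab_group_add) scX muX
           (\<lambda>c (b, x). (scB c b, scX c x))
           (\<lambda>(b, x) (b', x'). (muB b b', muX x x' + muX (phi b) x' + muX x (phi b')))
           scB muB (\<lambda>x. (0, x)) fst (\<lambda>b. (b, 0))"
proof -
  define sc where "sc = (\<lambda>c (b, x). (scB c b, scX c x))"
  define mu where "mu = (\<lambda>(b, x) (b', x'). (muB b b', muX x x' + muX (phi b) x' + muX x (phi b')))"
  have XA: "is_algebra scX muX" using X unfolding is_alt_algebra_def by blast
  have BA: "is_algebra scB muB" using B unfolding is_alt_algebra_def by blast
  note xf = alg_facts[OF XA] and bf = alg_facts[OF BA] and pf = hom_facts[OF phi]
  have vX: "vector_space scX" and vB: "vector_space scB" using XA BA unfolding is_algebra_def by blast+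
  have alt1X: "muX (muX y x) x = muX y (muX x x)" and alt2X: "muX x (muX x y) = muX (muX x x) y" for x y
    using X unfolding is_alt_algebra_def by blast+
  have alt1B: "muB (muB y x) x = muB y (muB x x)" and alt2B: "muB x (muB x y) = muB (muB x x) y" for x y
    using B unfolding is_alt_algebra_def by blast+
  define Y where "Y = (\<lambda>(b::'b, x::'x). x + phi b)"
  have muY: "mu P Q = (muB (fst P) (fst Q), muX (Y P) (Y Q) - phi (muB (fst P) (fst Q)))" for P Q
    by (cases P; cases Q) (simp add: mu_def Y_def xf pf algebra_simps)
  have YM: "Y (mu P Q) = muX (Y P) (Y Q)" for P Q
    by (simp add: muY Y_def)
  have fstM: "fst (mu P Q) = muB (fst P) (fst Q)" for P Q by (simp add: muY)
  have vA: "vector_space sc"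
    using vX vB unfolding vector_space_def sc_def by (auto simp: split_beta)
  have Aalg: "is_algebra sc mu"
    unfolding is_algebra_def
  proof (intro conjI allI)
    show "vector_space sc" by (fact vA)
    show "mu (x + y) z = mu x z + mu y z" for x y z
      by (cases x; cases y; cases z) (simp add: mu_def xf bf pf algebra_simps)
    show "mu z (x + y) = mu z x + mu z y" for x y z
      by (cases x; cases y; cases z) (simp add: mu_def xf bf pf algebra_simps)
    show "mu (sc c x) y = sc c (mu x y)" for c x y
      by (cases x; cases y) (simp add: mu_def sc_def xf bf pf)
    show "mu x (sc c y) = sc c (mu x y)" for c x y
      by (cases x; cases y) (simp add: mu_def sc_def xf bf pf)
  qed
  have Aalt: "is_alt_algebra sc mu"
    unfolding is_alt_algebra_def
  proof (intro conjI allI)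
    show "is_algebra sc mu" by (fact Aalg)
    show "mu (mu y x) x = mu y (mu x x)" for x y
      using muY[of "mu y x" x] muY[of y "mu x x"] YM[of y x] YM[of x x] fstM[of y x] fstM[of x x]
      by (simp add: alt1X alt1B)
    show "mu x (mu x y) = mu (mu x x) y" for x y
      using muY[of x "mu x y"] muY[of "mu x x" y] YM[of x y] YM[of x x] fstM[of x y] fstM[of x x]
      by (simp add: alt2X alt2B)
  qed
  have homfst: "alg_hom sc mu scB muB fst"
    unfolding alg_hom_def by (auto simp: sc_def mu_def split_beta)
  have hombeta: "alg_hom scB muB sc mu (\<lambda>b. (b, 0))"
    unfolding alg_hom_def by (auto simp: sc_def mu_def xf module.scale_zero_right[OF vX[folded module_iff_vector_space]])
  have homk: "alg_hom scX muX sc mu (\<lambda>x. (0, x))"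
    unfolding alg_hom_def by (auto simp: sc_def mu_def xf bf(5) pf module.scale_zero_right[OF vB[folded module_iff_vector_space]])
  have ker: "is_kernel_Alt TYPE('z) scX muX (\<lambda>x. (0, x)) sc mu fst TYPE('b)"
    unfolding is_kernel_Alt_def
  proof (intro conjI allI impI)
    show "is_alt_algebra scX muX" by (fact X)
    show "alg_hom scX muX sc mu (\<lambda>x. (0, x))" by (fact homk)
    show "fst (0, x) = 0" for x :: 'x by simp
    fix scZ :: "'k \<Rightarrow> 'z \<Rightarrow> 'z" and muZ g
    assume H: "is_alt_algebra scZ muZ \<and> alg_hom scZ muZ sc mu g \<and> (\<forall>z. fst (g z) = 0)"
    then have g0: "fst (g z) = 0" and gh: "alg_hom scZ muZ sc mu g" for z by blast+
    have geq: "g z = (0, snd (g z))" for z using g0[of z] by (cases "g z") simp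
    have "alg_hom scZ muZ scX muX (\<lambda>z. snd (g z))"
      unfolding alg_hom_def
    proof (intro conjI allI)
      show "snd (g (x + y)) = snd (g x) + snd (g y)" for x y
        using hom_facts(1)[OF gh, of x y] by simp
      show "snd (g (scZ c x)) = scX c (snd (g x))" for c x
        using hom_facts(2)[OF gh, of c x] by (simp add: sc_def split_beta)
      show "snd (g (muZ x y)) = muX (snd (g x)) (snd (g y))" for x y
      proof -
        obtain a where a: "g x = (0, a)" using geq[of x] by blast
        obtain b where b: "g y = (0, b)" using geq[of y] by blast
        show ?thesis using hom_facts(3)[OF gh, of x y] by (simp add: a b mu_def pf(4) xf(5) xf(6))
      qed
    qed
    then have hh: "alg_hom scZ muZ scX muX (\<lambda>z. snd (g z))" .
    show "\<exists>!h. alg_hom scZ muZ scX muX h \<and> (\<forall>z. (0, h z) = g z)"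
    proof (rule ex1I[of _ "\<lambda>z. snd (g z)"])
      show "alg_hom scZ muZ scX muX (\<lambda>z. snd (g z)) \<and> (\<forall>z. (0, snd (g z)) = g z)"
        using hh geq by simp
      show "h = (\<lambda>z. snd (g z))" if "alg_hom scZ muZ scX muX h \<and> (\<forall>z. (0, h z) = g z)" for h
      proof
        fix z show "h z = snd (g z)" using that by (metis snd_conv)
      qed
    qed
  qed
  have "split_extension_Alt TYPE('z) scX muX sc mu scB muB (\<lambda>x. (0, x)) fst (\<lambda>b. (b, 0))"
    unfolding split_extension_Alt_def using X Aalt B homfst hombeta ker by (simp add: comp_def id_def)
  then show ?thesis using Aalt unfolding sc_def mu_def by simp
qed

end
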